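(* Let $\Omega$ be a set and let $G=H\times K\leq{\rm Sym}(\Omega)$ be a finite transitive group which is the internal direct product of subgroups $H$ and $K$ with $\gcd(|H|,|K|)=1$. Let $\alpha\in\Omega$ (so $\Omega=\alpha^G$), $\Omega_1=\alpha^H$ and $\Omega_2=\alpha^K$. Then $G$ acts on $\Omega_1\times\Omega_2$ by the rule $(\alpha^h,\alpha^k)^g=(\alpha^{hh_1},\alpha^{kk_1})$ for $h\in H$, $k\in K$ and $g=h_1k_1$ with $h_1\in H$, $k_1\in K$, and the action of $G$ on $\Omega$ is equivalent to this action of $G$ on $\Omega_1\times\Omega_2$.
   Context: Permutations act on the right; $\alpha^X$ denotes the orbit of $\alpha$ under $X$. Two actions of $G$ on sets $\Omega$ and $\Delta$ are equivalent if there is a bijection $\lambda:\Omega\to\Delta$ with $\lambda(\beta^x)=\lambda(\beta)^x$ for all $\beta\in\Omega$, $x\in G$. *)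

theory Defs
  imports "HOL-Algebra.Group_Action"
begin

definition transitive_on :: "('a \<Rightarrow> 'a) set \<Rightarrow> 'a set \<Rightarrow> bool" where
  "transitive_on G \<Omega> \<longleftrightarrow> (\<forall>\<beta>\<in>\<Omega>. \<forall>\<gamma>\<in>\<Omega>. \<exists>g\<in>G. g \<beta> = \<gamma>)"

definition internal_direct_product :: "('g, 'b) monoid_scheme \<Rightarrow> 'g set \<Rightarrow> 'g set \<Rightarrow> 'g set \<Rightarrow> bool" where
  "internal_direct_product S G H K \<longleftrightarrow>
     subgroup G S \<and> subgroup H S \<and> subgroup K S \<and> H \<subseteq> G \<and> K \<subseteq> G \<and>
     H <#>\<^bsub>S\<^esub> K = G \<and> H \<inter> K = {\<one>\<^bsub>S\<^esub>} \<and>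
     (\<forall>h\<in>H. \<forall>k\<in>K. h \<otimes>\<^bsub>S\<^esub> k = k \<otimes>\<^bsub>S\<^esub> h)"

end

theory Submission
  imports Defs "HOL-Algebra.Multiplicative_Group" "HOL-Number_Theory.Cong"
begin

locale dps =
  fixes \<Omega> :: "'a set" and G H K :: "('a \<Rightarrow> 'a) set" and \<alpha> :: 'a
  assumes sG: "subgroup G (BijGroup \<Omega>)"
    and fin: "finite G"
    and idp: "internal_direct_product (BijGroup \<Omega>) G H K"
    and cop: "coprime (card H) (card K)"
    and a\<Omega>: "\<alpha> \<in> \<Omega>"
begin

abbreviation "BG \<equiv> BijGroup \<Omega>"

sublocale BG: group BG by (rule group_BijGroup)

lemma sH: "subgroup H BG" and sK: "subgroup K BG"
  and HG: "H \<subseteq> G" and KG: "K \<subseteq> G" and HK: "H <#>\<^bsub>BG\<^esub> K = G"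
  and HiK: "H \<inter> K = {\<one>\<^bsub>BG\<^esub>}" and comm: "\<And>h k. h \<in> H \<Longrightarrow> k \<in> K \<Longrightarrow> h \<otimes>\<^bsub>BG\<^esub> k = k \<otimes>\<^bsub>BG\<^esub> h"
  using idp unfolding internal_direct_product_def by auto

lemma Hc: "h \<in> H \<Longrightarrow> h \<in> carrier BG" using sH subgroup.subset by blast
lemma Kc: "h \<in> K \<Longrightarrow> h \<in> carrier BG" using sK subgroup.subset by blast
lemma Gc: "h \<in> G \<Longrightarrow> h \<in> carrier BG" using sG subgroup.subset by blast

lemma mult_apply: "f \<in> carrier BG \<Longrightarrow> g \<in> carrier BG \<Longrightarrow> x \<in> \<Omega> \<Longrightarrow> (f \<otimes>\<^bsub>BG\<^esub> g) x = f (g x)"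
  by (simp add: BijGroup_def compose_def)

lemma one_apply: "x \<in> \<Omega> \<Longrightarrow> \<one>\<^bsub>BG\<^esub> x = x"
  by (simp add: BijGroup_def)

lemma app_in: "f \<in> carrier BG \<Longrightarrow> x \<in> \<Omega> \<Longrightarrow> f x \<in> \<Omega>"
  by (auto simp: BijGroup_def dest: Bij_imp_funcset)

lemma decomp: "g \<in> G \<Longrightarrow> \<exists>h\<in>H. \<exists>k\<in>K. g = h \<otimes>\<^bsub>BG\<^esub> k"
  using HK unfolding set_mult_def by auto

lemma inG: "h \<in> H \<Longrightarrow> k \<in> K \<Longrightarrow> h \<otimes>\<^bsub>BG\<^esub> k \<in> G"
  using HK unfolding set_mult_def by auto

lemma uniq: assumes "h \<in> H" "k \<in> K" "h' \<in> H" "k' \<in> K" "h \<otimes>\<^bsub>BG\<^esub> k = h' \<otimes>\<^bsub>BG\<^esub> k'"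
  shows "h = h' \<and> k = k'"
proof -
  have c: "h \<in> carrier BG" "k \<in> carrier BG" "h' \<in> carrier BG" "k' \<in> carrier BG"
    using assms Hc Kc by auto
  have "inv\<^bsub>BG\<^esub> h' \<otimes>\<^bsub>BG\<^esub> h = k' \<otimes>\<^bsub>BG\<^esub> inv\<^bsub>BG\<^esub> k"
    using c assms(5) by (metis BG.inv_solve_left' BG.inv_solve_right BG.m_assoc BG.inv_closed BG.m_closed)
  moreover have "inv\<^bsub>BG\<^esub> h' \<otimes>\<^bsub>BG\<^esub> h \<in> H" using assms sH
    by (simp add: subgroup.m_closed subgroup.m_inv_closed)
  moreover have "k' \<otimes>\<^bsub>BG\<^esub> inv\<^bsub>BG\<^esub> k \<in> K" using assms sK
    by (simp add: subgroup.m_closed subgroup.m_inv_closed)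
  ultimately have "inv\<^bsub>BG\<^esub> h' \<otimes>\<^bsub>BG\<^esub> h = \<one>\<^bsub>BG\<^esub>" "k' \<otimes>\<^bsub>BG\<^esub> inv\<^bsub>BG\<^esub> k = \<one>\<^bsub>BG\<^esub>"
    using HiK by auto
  then show ?thesis using c
    by (metis BG.inv_equality BG.inv_inv BG.inv_closed BG.r_inv)
qed

definition "hp g = (THE h. h \<in> H \<and> (\<exists>k\<in>K. g = h \<otimes>\<^bsub>BG\<^esub> k))"
definition "kp g = (THE k. k \<in> K \<and> (\<exists>h\<in>H. g = h \<otimes>\<^bsub>BG\<^esub> k))"

lemma hp_eq: assumes "h \<in> H" "k \<in> K" shows "hp (h \<otimes>\<^bsub>BG\<^esub> k) = h"
  unfolding hp_def
proof (rule the_equality)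
  show "h \<in> H \<and> (\<exists>k'\<in>K. h \<otimes>\<^bsub>BG\<^esub> k = h \<otimes>\<^bsub>BG\<^esub> k')" using assms by auto
next
  fix h' assume "h' \<in> H \<and> (\<exists>k'\<in>K. h \<otimes>\<^bsub>BG\<^esub> k = h' \<otimes>\<^bsub>BG\<^esub> k')"
  then obtain k' where "h' \<in> H" "k' \<in> K" "h \<otimes>\<^bsub>BG\<^esub> k = h' \<otimes>\<^bsub>BG\<^esub> k'" by auto
  then show "h' = h" using uniq[OF assms] by simp
qed

lemma kp_eq: assumes "h \<in> H" "k \<in> K" shows "kp (h \<otimes>\<^bsub>BG\<^esub> k) = k"
  unfolding kp_def
proof (rule the_equality)
  show "k \<in> K \<and> (\<exists>h'\<in>H. h \<otimes>\<^bsub>BG\<^esub> k = h' \<otimes>\<^bsub>BG\<^esub> k)" using assms by auto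
next
  fix k' assume "k' \<in> K \<and> (\<exists>h'\<in>H. h \<otimes>\<^bsub>BG\<^esub> k = h' \<otimes>\<^bsub>BG\<^esub> k')"
  then obtain h' where "h' \<in> H" "k' \<in> K" "h \<otimes>\<^bsub>BG\<^esub> k = h' \<otimes>\<^bsub>BG\<^esub> k'" by auto
  then show "k' = k" using uniq[OF assms] by simp
qed

lemma hk_props: assumes "g \<in> G" shows "hp g \<in> H" "kp g \<in> K" "g = hp g \<otimes>\<^bsub>BG\<^esub> kp g"
proof -
  obtain h k where hk: "h \<in> H" "k \<in> K" "g = h \<otimes>\<^bsub>BG\<^esub> k" using decomp[OF assms] by blast
  have "hp g = h" "kp g = k" using hk hp_eq kp_eq by simp_all
  then show "hp g \<in> H" "kp g \<in> K" "g = hp g \<otimes>\<^bsub>BG\<^esub> kp g" using hk by simp_all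
qed

lemma hk_mult: assumes "g \<in> G" "g' \<in> G"
  shows "hp (g \<otimes>\<^bsub>BG\<^esub> g') = hp g \<otimes>\<^bsub>BG\<^esub> hp g'" "kp (g \<otimes>\<^bsub>BG\<^esub> g') = kp g \<otimes>\<^bsub>BG\<^esub> kp g'"
proof -
  let ?h = "hp g" and ?k = "kp g" and ?h' = "hp g'" and ?k' = "kp g'"
  have m: "?h \<in> H" "?k \<in> K" "?h' \<in> H" "?k' \<in> K" using hk_props assms by auto
  have c: "?h \<in> carrier BG" "?k \<in> carrier BG" "?h' \<in> carrier BG" "?k' \<in> carrier BG"
    using m Hc Kc by auto
  have "g \<otimes>\<^bsub>BG\<^esub> g' = (?h \<otimes>\<^bsub>BG\<^esub> ?k) \<otimes>\<^bsub>BG\<^esub> (?h' \<otimes>\<^bsub>BG\<^esub> ?k')"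
    using hk_props(3)[OF assms(1)] hk_props(3)[OF assms(2)] by simp
  also have "\<dots> = ?h \<otimes>\<^bsub>BG\<^esub> (?k \<otimes>\<^bsub>BG\<^esub> ?h') \<otimes>\<^bsub>BG\<^esub> ?k'" using c by (simp add: BG.m_assoc)
  also have "\<dots> = ?h \<otimes>\<^bsub>BG\<^esub> (?h' \<otimes>\<^bsub>BG\<^esub> ?k) \<otimes>\<^bsub>BG\<^esub> ?k'" using comm[of ?h' ?k] m by simp
  also have "\<dots> = (?h \<otimes>\<^bsub>BG\<^esub> ?h') \<otimes>\<^bsub>BG\<^esub> (?k \<otimes>\<^bsub>BG\<^esub> ?k')" using c by (simp add: BG.m_assoc)
  finally have e: "g \<otimes>\<^bsub>BG\<^esub> g' = (?h \<otimes>\<^bsub>BG\<^esub> ?h') \<otimes>\<^bsub>BG\<^esub> (?k \<otimes>\<^bsub>BG\<^esub> ?k')" .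
  have "?h \<otimes>\<^bsub>BG\<^esub> ?h' \<in> H" "?k \<otimes>\<^bsub>BG\<^esub> ?k' \<in> K" using m subgroup.m_closed[OF sH] subgroup.m_closed[OF sK] by simp_all
  then show "hp (g \<otimes>\<^bsub>BG\<^esub> g') = hp g \<otimes>\<^bsub>BG\<^esub> hp g'" "kp (g \<otimes>\<^bsub>BG\<^esub> g') = kp g \<otimes>\<^bsub>BG\<^esub> kp g'"
    unfolding e by (simp_all only: hp_eq kp_eq)
qed

lemma pow_card: assumes "subgroup S BG" "x \<in> S" shows "x [^]\<^bsub>BG\<^esub> card S = \<one>\<^bsub>BG\<^esub>"
proof -
  interpret S: group "BG\<lparr>carrier := S\<rparr>" using subgroup.subgroup_is_group[OF assms(1) BG.is_group] .
  have "x [^]\<^bsub>BG\<lparr>carrier := S\<rparr>\<^esub> order (BG\<lparr>carrier := S\<rparr>) = \<one>\<^bsub>BG\<lparr>carrier := S\<rparr>\<^esub>"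
    using S.pow_order_eq_1 assms(2) by simp
  then show ?thesis by (simp add: order_def BG.nat_pow_consistent[symmetric])
qed

lemma fix_pow: "g \<in> carrier BG \<Longrightarrow> g \<alpha> = \<alpha> \<Longrightarrow> (g [^]\<^bsub>BG\<^esub> (n::nat)) \<alpha> = \<alpha>"
  by (induction n) (auto simp: mult_apply one_apply a\<Omega>)

lemma pow_mod: assumes "subgroup S BG" "x \<in> S" shows "x [^]\<^bsub>BG\<^esub> n = x [^]\<^bsub>BG\<^esub> (n mod card S)"
proof -
  have xc: "x \<in> carrier BG" using assms subgroup.subset by blast
  have "x [^]\<^bsub>BG\<^esub> n = x [^]\<^bsub>BG\<^esub> (card S * (n div card S)) \<otimes>\<^bsub>BG\<^esub> x [^]\<^bsub>BG\<^esub> (n mod card S)"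
    using BG.nat_pow_mult[OF xc] by (metis div_mult_mod_eq mult.commute)
  also have "x [^]\<^bsub>BG\<^esub> (card S * (n div card S)) = \<one>\<^bsub>BG\<^esub>"
    using BG.nat_pow_pow[OF xc, symmetric] pow_card[OF assms] by simp
  finally show ?thesis using xc by simp
qed

lemma key: assumes "h \<in> H" "k \<in> K" "(h \<otimes>\<^bsub>BG\<^esub> k) \<alpha> = \<alpha>" shows "h \<alpha> = \<alpha>"
proof -
  have c: "h \<in> carrier BG" "k \<in> carrier BG" using assms Hc Kc by auto
  have "(h \<otimes>\<^bsub>BG\<^esub> k) [^]\<^bsub>BG\<^esub> card K = h [^]\<^bsub>BG\<^esub> card K \<otimes>\<^bsub>BG\<^esub> k [^]\<^bsub>BG\<^esub> card K"
    using BG.pow_mult_distrib comm assms c by blast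
  also have "\<dots> = h [^]\<^bsub>BG\<^esub> card K" using pow_card[OF sK assms(2)] c by simp
  finally have f1: "(h [^]\<^bsub>BG\<^esub> card K) \<alpha> = \<alpha>"
    using fix_pow[of "h \<otimes>\<^bsub>BG\<^esub> k" "card K"] assms c by simp
  obtain u where u: "[card K * u = 1] (mod card H)"
    using cong_solve_coprime_nat[of "card K" "card H"] cop by (auto simp: coprime_commute)
  have "(h [^]\<^bsub>BG\<^esub> (card K * u)) \<alpha> = \<alpha>"
    using fix_pow[of "h [^]\<^bsub>BG\<^esub> card K" u] f1 c by (simp add: BG.nat_pow_pow)
  moreover have "h [^]\<^bsub>BG\<^esub> (card K * u) = h [^]\<^bsub>BG\<^esub> (1::nat)"
  proof -
    have "h [^]\<^bsub>BG\<^esub> (card K * u) = h [^]\<^bsub>BG\<^esub> ((card K * u) mod card H)"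
      by (rule pow_mod[OF sH assms(1)])
    also have "\<dots> = h [^]\<^bsub>BG\<^esub> ((1::nat) mod card H)"
      using u unfolding cong_def by (rule arg_cong)
    also have "\<dots> = h [^]\<^bsub>BG\<^esub> (1::nat)"
      by (rule pow_mod[OF sH assms(1), symmetric])
    finally show ?thesis .
  qed
  ultimately show ?thesis using c by simp
qed

lemma key2: assumes "h \<in> H" "k \<in> K" "(h \<otimes>\<^bsub>BG\<^esub> k) \<alpha> = \<alpha>" shows "k \<alpha> = \<alpha>"
proof -
  have c: "h \<in> carrier BG" "k \<in> carrier BG" using assms Hc Kc by auto
  have f0: "(k \<otimes>\<^bsub>BG\<^esub> h) \<alpha> = \<alpha>" using assms comm[of h k] by metis
  have "(k \<otimes>\<^bsub>BG\<^esub> h) [^]\<^bsub>BG\<^esub> card H = k [^]\<^bsub>BG\<^esub> card H \<otimes>\<^bsub>BG\<^esub> h [^]\<^bsub>BG\<^esub> card H"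
    using BG.pow_mult_distrib comm assms c by metis
  also have "\<dots> = k [^]\<^bsub>BG\<^esub> card H" using pow_card[OF sH assms(1)] c by simp
  finally have f1: "(k [^]\<^bsub>BG\<^esub> card H) \<alpha> = \<alpha>"
    using fix_pow[of "k \<otimes>\<^bsub>BG\<^esub> h" "card H"] f0 c by simp
  obtain u where u: "[card H * u = 1] (mod card K)"
    using cong_solve_coprime_nat[of "card H" "card K"] cop by auto
  have "(k [^]\<^bsub>BG\<^esub> (card H * u)) \<alpha> = \<alpha>"
    using fix_pow[of "k [^]\<^bsub>BG\<^esub> card H" u] f1 c by (simp add: BG.nat_pow_pow)
  moreover have "k [^]\<^bsub>BG\<^esub> (card H * u) = k [^]\<^bsub>BG\<^esub> (1::nat)"
  proof -
    have "k [^]\<^bsub>BG\<^esub> (card H * u) = k [^]\<^bsub>BG\<^esub> ((card H * u) mod card K)"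
      by (rule pow_mod[OF sK assms(2)])
    also have "\<dots> = k [^]\<^bsub>BG\<^esub> ((1::nat) mod card K)"
      using u unfolding cong_def by (rule arg_cong)
    also have "\<dots> = k [^]\<^bsub>BG\<^esub> (1::nat)"
      by (rule pow_mod[OF sK assms(2), symmetric])
    finally show ?thesis .
  qed
  ultimately show ?thesis using c by simp
qed

lemma wd: assumes "g \<in> G" "g' \<in> G" "g \<alpha> = g' \<alpha>"
  shows "hp g \<alpha> = hp g' \<alpha>" "kp g \<alpha> = kp g' \<alpha>"
proof -
  let ?h = "hp g" and ?k = "kp g" and ?h' = "hp g'" and ?k' = "kp g'"
  have m: "?h \<in> H" "?k \<in> K" "?h' \<in> H" "?k' \<in> K" using hk_props assms by auto
  have c: "?h \<in> carrier BG" "?k \<in> carrier BG" "?h' \<in> carrier BG" "?k' \<in> carrier BG"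
    using m Hc Kc by auto
  define x where "x = inv\<^bsub>BG\<^esub> ?h \<otimes>\<^bsub>BG\<^esub> ?h'"
  define y where "y = inv\<^bsub>BG\<^esub> ?k \<otimes>\<^bsub>BG\<^esub> ?k'"
  have xH: "x \<in> H" unfolding x_def using m sH by (simp add: subgroup.m_closed subgroup.m_inv_closed)
  have yK: "y \<in> K" unfolding y_def using m sK by (simp add: subgroup.m_closed subgroup.m_inv_closed)
  have ikK: "inv\<^bsub>BG\<^esub> ?k \<in> K" using m sK by (simp add: subgroup.m_inv_closed)
  have xc: "x \<in> carrier BG" and yc: "y \<in> carrier BG" using xH yK Hc Kc by auto
  have gc: "g \<in> carrier BG" "g' \<in> carrier BG" using assms Gc by auto
  have "x \<otimes>\<^bsub>BG\<^esub> y = (x \<otimes>\<^bsub>BG\<^esub> inv\<^bsub>BG\<^esub> ?k) \<otimes>\<^bsub>BG\<^esub> ?k'"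
    unfolding y_def using xc c by (simp add: BG.m_assoc)
  also have "\<dots> = (inv\<^bsub>BG\<^esub> ?k \<otimes>\<^bsub>BG\<^esub> x) \<otimes>\<^bsub>BG\<^esub> ?k'" using comm[OF xH ikK] by simp
  also have "\<dots> = (inv\<^bsub>BG\<^esub> ?k \<otimes>\<^bsub>BG\<^esub> inv\<^bsub>BG\<^esub> ?h) \<otimes>\<^bsub>BG\<^esub> (?h' \<otimes>\<^bsub>BG\<^esub> ?k')"
    unfolding x_def using c by (simp add: BG.m_assoc)
  also have "\<dots> = inv\<^bsub>BG\<^esub> (?h \<otimes>\<^bsub>BG\<^esub> ?k) \<otimes>\<^bsub>BG\<^esub> (?h' \<otimes>\<^bsub>BG\<^esub> ?k')"
    using c by (simp add: BG.inv_mult_group)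
  also have "\<dots> = inv\<^bsub>BG\<^esub> g \<otimes>\<^bsub>BG\<^esub> g'"
    using hk_props(3)[OF assms(1)] hk_props(3)[OF assms(2)] by simp
  finally have xy: "x \<otimes>\<^bsub>BG\<^esub> y = inv\<^bsub>BG\<^esub> g \<otimes>\<^bsub>BG\<^esub> g'" .
  have "(inv\<^bsub>BG\<^esub> g \<otimes>\<^bsub>BG\<^esub> g') \<alpha> = (inv\<^bsub>BG\<^esub> g) (g' \<alpha>)" using gc a\<Omega> by (simp add: mult_apply)
  also have "\<dots> = (inv\<^bsub>BG\<^esub> g) (g \<alpha>)" using assms(3) by simp
  also have "\<dots> = \<alpha>" using gc a\<Omega> by (metis BG.inv_closed BG.l_inv mult_apply one_apply)
  finally have fx: "(x \<otimes>\<^bsub>BG\<^esub> y) \<alpha> = \<alpha>" using xy by simp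
  have xa: "x \<alpha> = \<alpha>" using key[OF xH yK fx] .
  have ya: "y \<alpha> = \<alpha>" using key2[OF xH yK fx] .
  have "?h \<otimes>\<^bsub>BG\<^esub> x = ?h'" unfolding x_def using c by (simp add: BG.m_assoc[symmetric])
  then have "?h' \<alpha> = ?h (x \<alpha>)" using c xc a\<Omega> by (metis mult_apply)
  then show "hp g \<alpha> = hp g' \<alpha>" using xa by simp
  have "?k \<otimes>\<^bsub>BG\<^esub> y = ?k'" unfolding y_def using c by (simp add: BG.m_assoc[symmetric])
  then have "?k' \<alpha> = ?k (y \<alpha>)" using c yc a\<Omega> by (metis mult_apply)
  then show "kp g \<alpha> = kp g' \<alpha>" using ya by simp
qed

lemma orb_bij: assumes "subgroup S BG" "s0 \<in> S"
  shows "bij_betw s0 ((\<lambda>s. s \<alpha>) ` S) ((\<lambda>s. s \<alpha>) ` S)"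
proof (rule bij_betw_byWitness[where f'="(inv\<^bsub>BG\<^esub> s0)"])
  have Sc: "\<And>s. s \<in> S \<Longrightarrow> s \<in> carrier BG" using subgroup.subset[OF assms(1)] by (simp add: subset_iff)
  have s0c: "s0 \<in> carrier BG" using Sc assms(2) .
  have is0: "inv\<^bsub>BG\<^esub> s0 \<in> S" using subgroup.m_inv_closed[OF assms] .
  have ap: "f (s \<alpha>) = (f \<otimes>\<^bsub>BG\<^esub> s) \<alpha>" "f \<otimes>\<^bsub>BG\<^esub> s \<in> S" if "f \<in> S" "s \<in> S" for f s
  proof -
    show "f (s \<alpha>) = (f \<otimes>\<^bsub>BG\<^esub> s) \<alpha>" using Sc[OF that(1)] Sc[OF that(2)] a\<Omega> by (simp add: mult_apply)
    show "f \<otimes>\<^bsub>BG\<^esub> s \<in> S" using that subgroup.m_closed[OF assms(1)] by simp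
  qed
  show "\<forall>a\<in>(\<lambda>s. s \<alpha>) ` S. (inv\<^bsub>BG\<^esub> s0) (s0 a) = a"
  proof
    fix a assume "a \<in> (\<lambda>s. s \<alpha>) ` S"
    then obtain s where s: "s \<in> S" "a = s \<alpha>" by auto
    have "s \<alpha> \<in> \<Omega>" using app_in[OF Sc[OF s(1)] a\<Omega>] .
    then have "(inv\<^bsub>BG\<^esub> s0) (s0 a) = (inv\<^bsub>BG\<^esub> s0 \<otimes>\<^bsub>BG\<^esub> s0) a" using s
      by (simp only: mult_apply[OF BG.inv_closed[OF s0c] s0c])
    then show "(inv\<^bsub>BG\<^esub> s0) (s0 a) = a" using s s0c \<open>s \<alpha> \<in> \<Omega>\<close>
      by (simp add: one_apply)
  qed
  show "\<forall>a\<in>(\<lambda>s. s \<alpha>) ` S. s0 ((inv\<^bsub>BG\<^esub> s0) a) = a"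
  proof
    fix a assume "a \<in> (\<lambda>s. s \<alpha>) ` S"
    then obtain s where s: "s \<in> S" "a = s \<alpha>" by auto
    have "s \<alpha> \<in> \<Omega>" using app_in[OF Sc[OF s(1)] a\<Omega>] .
    then have "s0 ((inv\<^bsub>BG\<^esub> s0) a) = (s0 \<otimes>\<^bsub>BG\<^esub> inv\<^bsub>BG\<^esub> s0) a" using s
      by (simp only: mult_apply[OF s0c BG.inv_closed[OF s0c]])
    then show "s0 ((inv\<^bsub>BG\<^esub> s0) a) = a" using s s0c \<open>s \<alpha> \<in> \<Omega>\<close>
      by (simp add: one_apply)
  qed
  show "s0 ` (\<lambda>s. s \<alpha>) ` S \<subseteq> (\<lambda>s. s \<alpha>) ` S"
  proof
    fix b assume "b \<in> s0 ` (\<lambda>s. s \<alpha>) ` S"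
    then obtain s where s: "s \<in> S" "b = s0 (s \<alpha>)" by auto
    then show "b \<in> (\<lambda>s. s \<alpha>) ` S" using ap[OF assms(2) s(1)] s by (intro image_eqI[of _ _ "s0 \<otimes>\<^bsub>BG\<^esub> s"]) simp_all
  qed
  show "(inv\<^bsub>BG\<^esub> s0) ` (\<lambda>s. s \<alpha>) ` S \<subseteq> (\<lambda>s. s \<alpha>) ` S"
  proof
    fix b assume "b \<in> (inv\<^bsub>BG\<^esub> s0) ` (\<lambda>s. s \<alpha>) ` S"
    then obtain s where s: "s \<in> S" "b = (inv\<^bsub>BG\<^esub> s0) (s \<alpha>)" by auto
    then show "b \<in> (\<lambda>s. s \<alpha>) ` S" using ap[OF is0 s(1)] s by (intro image_eqI[of _ _ "inv\<^bsub>BG\<^esub> s0 \<otimes>\<^bsub>BG\<^esub> s"]) simp_all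
  qed
qed

lemma app_split: assumes "g \<in> G"
  shows "g \<alpha> = hp g (kp g \<alpha>)" "g \<alpha> = kp g (hp g \<alpha>)"
proof -
  have m: "hp g \<in> H" "kp g \<in> K" using hk_props[OF assms] by simp_all
  have c: "hp g \<in> carrier BG" "kp g \<in> carrier BG" using m Hc Kc by simp_all
  have e: "g = hp g \<otimes>\<^bsub>BG\<^esub> kp g" using hk_props(3)[OF assms] .
  show "g \<alpha> = hp g (kp g \<alpha>)" using mult_apply[OF c a\<Omega>] e by simp
  have "g = kp g \<otimes>\<^bsub>BG\<^esub> hp g" using e comm[OF m] by simp
  then show "g \<alpha> = kp g (hp g \<alpha>)" using mult_apply[OF c(2) c(1) a\<Omega>] by simp
qed

lemma main:
  assumes tr: "transitive_on G \<Omega>"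
  shows "\<exists>\<rho>. group_action ((BijGroup \<Omega>)\<lparr>carrier := G\<rparr>)
                   ((\<lambda>h. h \<alpha>) ` H \<times> (\<lambda>k. k \<alpha>) ` K) \<rho>
            \<and> (\<forall>h\<in>H. \<forall>k\<in>K. \<forall>h1\<in>H. \<forall>k1\<in>K.
                 \<rho> (h1 \<otimes>\<^bsub>BijGroup \<Omega>\<^esub> k1) (h \<alpha>, k \<alpha>) = (h1 (h \<alpha>), k1 (k \<alpha>)))
            \<and> (\<exists>\<sigma>. bij_betw \<sigma> \<Omega> ((\<lambda>h. h \<alpha>) ` H \<times> (\<lambda>k. k \<alpha>) ` K)
                 \<and> (\<forall>\<beta>\<in>\<Omega>. \<forall>g\<in>G. \<sigma> (g \<beta>) = \<rho> g (\<sigma> \<beta>)))"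
proof -
  define O1 where "O1 = (\<lambda>h. h \<alpha>) ` H"
  define O2 where "O2 = (\<lambda>k. k \<alpha>) ` K"
  define E where "E = O1 \<times> O2"
  define \<rho> where "\<rho> = (\<lambda>g. \<lambda>p \<in> E. (hp g (fst p), kp g (snd p)))"
  have O1\<Omega>: "x \<in> \<Omega>" if xO: "x \<in> O1" for x
  proof -
    obtain h where "h \<in> H" "x = h \<alpha>" using xO[unfolded O1_def] by auto
    then show ?thesis using app_in[OF Hc a\<Omega>] by simp
  qed
  have O2\<Omega>: "x \<in> \<Omega>" if xO: "x \<in> O2" for x
  proof -
    obtain h where "h \<in> K" "x = h \<alpha>" using xO[unfolded O2_def] by auto
    then show ?thesis using app_in[OF Kc a\<Omega>] by simp
  qed
  have rhoB: "\<rho> g \<in> Bij E" if "g \<in> G" for g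
  proof -
    have "bij_betw (map_prod (hp g) (kp g)) E E"
      unfolding E_def O1_def O2_def
      by (rule bij_betw_map_prod[OF orb_bij[OF sH hk_props(1)[OF that]] orb_bij[OF sK hk_props(2)[OF that]]])
    moreover have "\<forall>p\<in>E. \<rho> g p = map_prod (hp g) (kp g) p" unfolding \<rho>_def by (auto simp: map_prod_def split: prod.splits)
    ultimately have "bij_betw (\<rho> g) E E" using bij_betw_cong by metis
    moreover have "\<rho> g \<in> extensional E" unfolding \<rho>_def by simp
    ultimately show ?thesis unfolding Bij_def by simp
  qed
  have rhoin: "\<rho> g p \<in> E" if "g \<in> G" "p \<in> E" for g p
    using Bij_imp_funcset[OF rhoB[OF that(1)]] that(2) by (simp add: Pi_iff)
  have rhomul: "\<rho> (g \<otimes>\<^bsub>BG\<^esub> g') = \<rho> g \<otimes>\<^bsub>BijGroup E\<^esub> \<rho> g'" if "g \<in> G" "g' \<in> G" for g g'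
  proof -
    have r: "\<rho> g \<otimes>\<^bsub>BijGroup E\<^esub> \<rho> g' = compose E (\<rho> g) (\<rho> g')"
      using rhoB that by (simp add: BijGroup_def)
    have c: "hp g \<in> carrier BG" "hp g' \<in> carrier BG" "kp g \<in> carrier BG" "kp g' \<in> carrier BG"
      using hk_props that Hc Kc by simp_all
    have "\<rho> (g \<otimes>\<^bsub>BG\<^esub> g') p = compose E (\<rho> g) (\<rho> g') p" for p
    proof (cases "p \<in> E")
      case True
      obtain x y where p: "p = (x, y)" "x \<in> O1" "y \<in> O2" using True[unfolded E_def] by auto
      have "\<rho> (g \<otimes>\<^bsub>BG\<^esub> g') p = ((hp g \<otimes>\<^bsub>BG\<^esub> hp g') x, (kp g \<otimes>\<^bsub>BG\<^esub> kp g') y)"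
        unfolding \<rho>_def using True p hk_mult[OF that] by simp
      also have "\<dots> = (hp g (hp g' x), kp g (kp g' y))"
        using mult_apply[OF c(1,2) O1\<Omega>[OF p(2)]] mult_apply[OF c(3,4) O2\<Omega>[OF p(3)]] by simp
      also have "\<dots> = compose E (\<rho> g) (\<rho> g') p"
        using True p rhoin[OF that(2) True] unfolding compose_def \<rho>_def by simp
      finally show ?thesis .
    next
      case False
      then show ?thesis unfolding \<rho>_def compose_def by simp
    qed
    then show ?thesis using r by auto
  qed
  have ga: "group_action (BG\<lparr>carrier := G\<rparr>) E \<rho>"
    unfolding group_action_def group_hom_def group_hom_axioms_def
  proof (intro conjI)
    show "group (BG\<lparr>carrier := G\<rparr>)" using subgroup.subgroup_is_group[OF sG BG.is_group] .
    show "group (BijGroup E)" by (rule group_BijGroup)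
    show "\<rho> \<in> hom (BG\<lparr>carrier := G\<rparr>) (BijGroup E)"
      unfolding hom_def using rhoB rhomul by (simp add: BijGroup_def Pi_iff)
  qed
  have c2: "\<forall>h\<in>H. \<forall>k\<in>K. \<forall>h1\<in>H. \<forall>k1\<in>K.
                 \<rho> (h1 \<otimes>\<^bsub>BG\<^esub> k1) (h \<alpha>, k \<alpha>) = (h1 (h \<alpha>), k1 (k \<alpha>))"
  proof (intro ballI)
    fix h k h1 k1 assume a: "h \<in> H" "k \<in> K" "h1 \<in> H" "k1 \<in> K"
    have "(h \<alpha>, k \<alpha>) \<in> E" unfolding E_def O1_def O2_def using a by simp
    then show "\<rho> (h1 \<otimes>\<^bsub>BG\<^esub> k1) (h \<alpha>, k \<alpha>) = (h1 (h \<alpha>), k1 (k \<alpha>))"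
      unfolding \<rho>_def using hp_eq[OF a(3,4)] kp_eq[OF a(3,4)] by simp
  qed
  define \<sigma> where "\<sigma> \<beta> = (hp (SOME g. g \<in> G \<and> g \<alpha> = \<beta>) \<alpha>, kp (SOME g. g \<in> G \<and> g \<alpha> = \<beta>) \<alpha>)" for \<beta>
  have sig: "\<sigma> (g \<alpha>) = (hp g \<alpha>, kp g \<alpha>)" if "g \<in> G" for g
  proof -
    define g0 where "g0 = (SOME g'. g' \<in> G \<and> g' \<alpha> = g \<alpha>)"
    have "g0 \<in> G \<and> g0 \<alpha> = g \<alpha>" unfolding g0_def by (rule someI[of _ g]) (simp add: that)
    then have "hp g0 \<alpha> = hp g \<alpha>" "kp g0 \<alpha> = kp g \<alpha>" using wd[of g0 g] that by simp_all
    then show ?thesis unfolding \<sigma>_def g0_def[symmetric] by simp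
  qed
  have orb: "\<exists>g\<in>G. g \<alpha> = \<beta>" if "\<beta> \<in> \<Omega>" for \<beta>
    using tr that a\<Omega> unfolding transitive_on_def by simp
  have bij: "bij_betw \<sigma> \<Omega> E"
    unfolding bij_betw_def
  proof
    show "inj_on \<sigma> \<Omega>"
    proof (rule inj_onI)
      fix \<beta> \<beta>' assume b: "\<beta> \<in> \<Omega>" "\<beta>' \<in> \<Omega>" "\<sigma> \<beta> = \<sigma> \<beta>'"
      obtain g where g: "g \<in> G" "g \<alpha> = \<beta>" using orb[OF b(1)] by auto
      obtain g' where g': "g' \<in> G" "g' \<alpha> = \<beta>'" using orb[OF b(2)] by auto
      have e: "hp g \<alpha> = hp g' \<alpha>" "kp g \<alpha> = kp g' \<alpha>" using b(3) sig[OF g(1)] sig[OF g'(1)] g(2) g'(2) by auto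
      have m: "hp g \<in> H" "kp g' \<in> K" using hk_props g g' by simp_all
      have c: "hp g \<in> carrier BG" "kp g' \<in> carrier BG" using m Hc Kc by simp_all
      have "\<beta> = hp g (kp g \<alpha>)" using app_split(1)[OF g(1)] g(2) by simp
      also have "\<dots> = hp g (kp g' \<alpha>)" using e by simp
      also have "\<dots> = (hp g \<otimes>\<^bsub>BG\<^esub> kp g') \<alpha>" using mult_apply[OF c a\<Omega>] by simp
      also have "\<dots> = (kp g' \<otimes>\<^bsub>BG\<^esub> hp g) \<alpha>" using comm[OF m] by simp
      also have "\<dots> = kp g' (hp g \<alpha>)" using mult_apply[OF c(2) c(1) a\<Omega>] by simp
      also have "\<dots> = kp g' (hp g' \<alpha>)" using e by simp
      also have "\<dots> = \<beta>'" using app_split(2)[OF g'(1)] g'(2) by simp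
      finally show "\<beta> = \<beta>'" .
    qed
    show "\<sigma> ` \<Omega> = E"
    proof
      show "\<sigma> ` \<Omega> \<subseteq> E"
      proof
        fix p assume "p \<in> \<sigma> ` \<Omega>"
        then obtain \<beta> where b: "\<beta> \<in> \<Omega>" "p = \<sigma> \<beta>" by auto
        obtain g where g: "g \<in> G" "g \<alpha> = \<beta>" using orb[OF b(1)] by auto
        have "p = (hp g \<alpha>, kp g \<alpha>)" using sig[OF g(1)] g(2) b(2) by simp
        then show "p \<in> E" unfolding E_def O1_def O2_def using hk_props[OF g(1)] by simp
      qed
      show "E \<subseteq> \<sigma> ` \<Omega>"
      proof
        fix p assume pE: "p \<in> E"
        obtain h k where hk: "h \<in> H" "k \<in> K" "p = (h \<alpha>, k \<alpha>)" using pE[unfolded E_def O1_def O2_def] by auto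
        have gG: "h \<otimes>\<^bsub>BG\<^esub> k \<in> G" using inG[OF hk(1,2)] .
        have "\<sigma> ((h \<otimes>\<^bsub>BG\<^esub> k) \<alpha>) = p" using sig[OF gG] hp_eq[OF hk(1,2)] kp_eq[OF hk(1,2)] hk(3) by simp
        moreover have "(h \<otimes>\<^bsub>BG\<^esub> k) \<alpha> \<in> \<Omega>" using app_in[OF Gc[OF gG] a\<Omega>] .
        ultimately show "p \<in> \<sigma> ` \<Omega>" by (intro image_eqI[of _ _ "(h \<otimes>\<^bsub>BG\<^esub> k) \<alpha>"]) simp_all
      qed
    qed
  qed
  have eqv: "\<forall>\<beta>\<in>\<Omega>. \<forall>g\<in>G. \<sigma> (g \<beta>) = \<rho> g (\<sigma> \<beta>)"
  proof (intro ballI)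
    fix \<beta> g assume b: "\<beta> \<in> \<Omega>" and gG: "g \<in> G"
    obtain g0 where g0: "g0 \<in> G" "g0 \<alpha> = \<beta>" using orb[OF b] by auto
    have gg0: "g \<otimes>\<^bsub>BG\<^esub> g0 \<in> G" using subgroup.m_closed[OF sG gG g0(1)] .
    have c: "hp g \<in> carrier BG" "hp g0 \<in> carrier BG" "kp g \<in> carrier BG" "kp g0 \<in> carrier BG"
      using hk_props gG g0(1) Hc Kc by simp_all
    have "g \<beta> = (g \<otimes>\<^bsub>BG\<^esub> g0) \<alpha>" using mult_apply[OF Gc[OF gG] Gc[OF g0(1)] a\<Omega>] g0(2) by simp
    then have "\<sigma> (g \<beta>) = (hp (g \<otimes>\<^bsub>BG\<^esub> g0) \<alpha>, kp (g \<otimes>\<^bsub>BG\<^esub> g0) \<alpha>)" using sig[OF gg0] by simp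
    also have "\<dots> = (hp g (hp g0 \<alpha>), kp g (kp g0 \<alpha>))"
      using hk_mult[OF gG g0(1)] mult_apply[OF c(1,2) a\<Omega>] mult_apply[OF c(3,4) a\<Omega>] by simp
    also have "\<dots> = \<rho> g (hp g0 \<alpha>, kp g0 \<alpha>)"
    proof -
      have "(hp g0 \<alpha>, kp g0 \<alpha>) \<in> E" unfolding E_def O1_def O2_def using hk_props[OF g0(1)] by simp
      then show ?thesis unfolding \<rho>_def by simp
    qed
    also have "\<dots> = \<rho> g (\<sigma> \<beta>)" using sig[OF g0(1)] g0(2) by simp
    finally show "\<sigma> (g \<beta>) = \<rho> g (\<sigma> \<beta>)" .
  qed
  show ?thesis
    using ga c2 bij eqv unfolding E_def O1_def O2_def by blast
qed

end

theorem mainTheorem14: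
  fixes \<Omega> :: "'a set" and G H K :: "('a \<Rightarrow> 'a) set" and \<alpha> :: 'a
  assumes "subgroup G (BijGroup \<Omega>)"
    and "finite G"
    and "transitive_on G \<Omega>"
    and "internal_direct_product (BijGroup \<Omega>) G H K"
    and "coprime (card H) (card K)"
    and "\<alpha> \<in> \<Omega>"
  shows "\<exists>\<rho>. group_action ((BijGroup \<Omega>)\<lparr>carrier := G\<rparr>)
                   ((\<lambda>h. h \<alpha>) ` H \<times> (\<lambda>k. k \<alpha>) ` K) \<rho>
            \<and> (\<forall>h\<in>H. \<forall>k\<in>K. \<forall>h1\<in>H. \<forall>k1\<in>K.
                 \<rho> (h1 \<otimes>\<^bsub>BijGroup \<Omega>\<^esub> k1) (h \<alpha>, k \<alpha>) = (h1 (h \<alpha>), k1 (k \<alpha>)))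
            \<and> (\<exists>\<sigma>. bij_betw \<sigma> \<Omega> ((\<lambda>h. h \<alpha>) ` H \<times> (\<lambda>k. k \<alpha>) ` K)
                 \<and> (\<forall>\<beta>\<in>\<Omega>. \<forall>g\<in>G. \<sigma> (g \<beta>) = \<rho> g (\<sigma> \<beta>)))"
proof -
  interpret dps \<Omega> G H K \<alpha> using assms by (simp add: dps_def)
  show ?thesis using main[OF assms(3)] .
qed

end
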